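(* For $p\in\mathbb{R}$ let $H_p:[0,\infty)^2\to[0,\infty)$ be $$H_p(r,t)=\frac{2}{p}\Big[\mathfrak{M}_1(r,t)-\mathfrak{M}_{1-p}(r,t)\Big]\ (p\neq 0),\qquad H_0(r,t)=r\ln r+t\ln t-(r+t)\ln\Big(\frac{r+t}{2}\Big)$$ (with $0\ln 0=0$). Then for every $p\in(-\infty,\tfrac12]\cup[1,+\infty)$ the function $\sqrt{H_p}$ is a metric on $[0,+\infty)$. For every $p\in(\tfrac12,1)$, $\sqrt{H_p}$ does not satisfy the triangle inequality on $[0,+\infty)$.
   Context: Power means: for $r,t\ge 0$ and $q\neq 0$, $\mathfrak{M}_q(r,t)=\big(\frac{r^q+t^q}{2}\big)^{1/q}$, except that $\mathfrak{M}_q(r,t)=0$ when $q<0$ and $r=0$ or $t=0$; $\mathfrak{M}_0(r,t)=\sqrt{rt}$. The function $H_p$ is the marginal perspective function $H_{U_p}$ induced by the power-like entropy $U_p(s)=\frac{1}{p(p-1)}(s^p-p(s-1)-1)$ ($p\neq0,1$), $U_1(s)=s\ln s-s+1$, $U_0(s)=s-1-\ln s$, i.e. the lower semicontinuous envelope of $(r,t)\mapsto\inf_{\theta>0}\big[tU_p(\theta/t)+rU_p(\theta/r)\big]$; the closed formula above is given. A function $D:[0,\infty)^2\to[0,\infty)$ is a metric on $[0,\infty)$ if $D(x,y)=0\iff x=y$, $D$ is symmetric, and $D(x,z)\le D(x,y)+D(y,z)$ for all $x,y,z$. *)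

theory Defs
  imports Complex_Main
begin

definition power_mean :: "real \<Rightarrow> real \<Rightarrow> real \<Rightarrow> real" where
  "power_mean q r t =
     (if q = 0 then sqrt (r * t)
      else if q < 0 \<and> (r = 0 \<or> t = 0) then 0
      else ((r powr q + t powr q) / 2) powr (1 / q))"

definition xlnx :: "real \<Rightarrow> real" where
  "xlnx x = (if x = 0 then 0 else x * ln x)"

definition H :: "real \<Rightarrow> real \<Rightarrow> real \<Rightarrow> real" where
  "H p r t =
     (if p = 0 then xlnx r + xlnx t - (if r + t = 0 then 0 else (r + t) * ln ((r + t) / 2))
      else (2 / p) * (power_mean 1 r t - power_mean (1 - p) r t))"

definition metric_on_nonneg :: "(real \<Rightarrow> real \<Rightarrow> real) \<Rightarrow> bool" where
  "metric_on_nonneg D \<longleftrightarrow>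
     (\<forall>x\<ge>0. \<forall>y\<ge>0. D x y = 0 \<longleftrightarrow> x = y) \<and>
     (\<forall>x\<ge>0. \<forall>y\<ge>0. D x y = D y x) \<and>
     (\<forall>x\<ge>0. \<forall>y\<ge>0. \<forall>z\<ge>0. D x z \<le> D x y + D y z)"

definition triangle_on_nonneg :: "(real \<Rightarrow> real \<Rightarrow> real) \<Rightarrow> bool" where
  "triangle_on_nonneg D \<longleftrightarrow> (\<forall>x\<ge>0. \<forall>y\<ge>0. \<forall>z\<ge>0. D x z \<le> D x y + D y z)"

end

theory Submission
  imports Defs
begin

lemma Q_pos:
  fixes F F1 F2 F3 :: "real \<Rightarrow> real"
  assumes d0: "\<And>s. 0<s \<Longrightarrow> (F has_real_derivative F1 s) (at s)"
  and d1: "\<And>s. 0<s \<Longrightarrow> (F1 has_real_derivative F2 s) (at s)"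
  and d2: "\<And>s. 0<s \<Longrightarrow> (F2 has_real_derivative F3 s) (at s)"
  and e0: "F 1 = 0" and e1: "F1 1 = 0" and pos: "\<And>s. 0<s \<Longrightarrow> s<1 \<Longrightarrow> F3 s > 0"
  and s: "0 < s" "s < 1"
  shows "(1-s)*F1 s + 2*F s > 0"
proof -
  define Q' where "Q' x = F1 x + (1-x)*F2 x" for x
  define Q where "Q x = (1-x)*F1 x + 2*F x" for x
  have dQ': "(Q' has_real_derivative (1-x)*F3 x) (at x)" if "0<x" for x
    unfolding Q'_def[abs_def]
    using d1[OF that] d2[OF that]
    by (auto intro!: derivative_eq_intros)
  have dQ: "(Q has_real_derivative Q' x) (at x)" if "0<x" for x
    unfolding Q_def[abs_def] Q'_def
    using d1[OF that] d0[OF that]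
    by (auto intro!: derivative_eq_intros simp: algebra_simps)
  have "Q' x < 0" if "0<x" "x<1" for x
  proof -
    have "Q' x < Q' 1"
    proof (rule DERIV_pos_imp_increasing_open[OF \<open>x<1\<close>])
      fix y assume "x<y" "y<1"
      then show "\<exists>z. DERIV Q' y :> z \<and> z > 0"
        using dQ'[of y] pos[of y] that by (intro exI[of _ "(1-y)*F3 y"]) auto
    next
      show "continuous_on {x..1} Q'"
      proof (intro continuous_at_imp_continuous_on ballI)
        fix z assume "z \<in> {x..1}" then have "0<z" using that by auto
        then show "isCont Q' z" using dQ' DERIV_isCont by blast
      qed
    qed
    then show ?thesis using e1 by (simp add: Q'_def)
  qed
  have "- Q s < - Q 1"
  proof (rule DERIV_pos_imp_increasing_open[OF \<open>s<1\<close>])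
    fix y assume "s<y" "y<1"
    then show "\<exists>z. DERIV (\<lambda>x. - Q x) y :> z \<and> z > 0"
      using dQ[of y] \<open>\<And>x. 0<x \<Longrightarrow> x<1 \<Longrightarrow> Q' x < 0\<close>[of y] s
      by (intro exI[of _ "- Q' y"]) (auto intro: derivative_intros)
  next
    show "continuous_on {s..1} (\<lambda>x. - Q x)"
    proof (intro continuous_at_imp_continuous_on ballI)
      fix z assume "z \<in> {s..1}" then have "0<z" using s by auto
      then show "isCont (\<lambda>x. - Q x) z" using dQ DERIV_isCont by (blast intro: continuous_intros)
    qed
  qed
  then show ?thesis using e0 e1 by (simp add: Q_def)
qed

lemma aux_frac: "(u::real) \<noteq> 0 \<Longrightarrow> (a * u^2 - b * (2*u*(-1))) / (u^2 * u^2) = (u*a + 2*b)/u^3"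
  by (simp add: field_simps power2_eq_square power3_eq_cube)

lemma g_strict:
  fixes F F1 F2 F3 :: "real \<Rightarrow> real"
  assumes d0: "\<And>s. 0<s \<Longrightarrow> (F has_real_derivative F1 s) (at s)"
  and d1: "\<And>s. 0<s \<Longrightarrow> (F1 has_real_derivative F2 s) (at s)"
  and d2: "\<And>s. 0<s \<Longrightarrow> (F2 has_real_derivative F3 s) (at s)"
  and e0: "F 1 = 0" and e1: "F1 1 = 0" and pos: "\<And>s. 0<s \<Longrightarrow> s<1 \<Longrightarrow> F3 s > 0"
  and cont: "continuous_on {0..1} F"
  and ab: "0 \<le> a" "a < b" "b < 1"
  shows "F a / (1-a)^2 < F b / (1-b)^2"
proof (rule DERIV_pos_imp_increasing_open[OF \<open>a<b\<close>])
  fix y assume y: "a<y" "y<b"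
  have dd: "DERIV (\<lambda>x. (1-x)^2) y :> 2*(1-y)*(-1)"
    by (auto intro!: derivative_eq_intros)
  have "((\<lambda>x. F x / (1-x)^2) has_real_derivative (F1 y * (1-y)^2 - F y * (2*(1-y)*(-1))) / ((1-y)^2 * (1-y)^2)) (at y)"
    using y ab by (intro DERIV_divide d0 dd) auto
  moreover have "(F1 y * (1-y)^2 - F y * (2*(1-y)*(-1))) / ((1-y)^2 * (1-y)^2) = ((1-y)*F1 y + 2*F y)/(1-y)^3"
    using y ab by (intro aux_frac) auto
  ultimately have "((\<lambda>x. F x / (1-x)^2) has_real_derivative ((1-y)*F1 y + 2*F y)/(1-y)^3) (at y)" by simp
  moreover have "((1-y)*F1 y + 2*F y)/(1-y)^3 > 0"
    using Q_pos[OF d0 d1 d2 e0 e1 pos, of y] y ab by simp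
  ultimately show "\<exists>z. DERIV (\<lambda>x. F x / (1-x)^2) y :> z \<and> z > 0" by blast
next
  show "continuous_on {a..b} (\<lambda>x. F x / (1-x)^2)"
    using ab by (intro continuous_intros continuous_on_subset[OF cont]) auto
qed

lemma metric_from_F:
  fixes h :: "real \<Rightarrow> real \<Rightarrow> real" and F :: "real \<Rightarrow> real"
  assumes sym: "\<And>r t. 0\<le>r \<Longrightarrow> 0\<le>t \<Longrightarrow> h r t = h t r"
  and hom: "\<And>c r t. 0<c \<Longrightarrow> 0\<le>r \<Longrightarrow> 0\<le>t \<Longrightarrow> h (c*r) (c*t) = c * h r t"
  and Fdef: "\<And>s. 0 \<le> s \<Longrightarrow> F s = h (s^2) 1"
  and F1: "F 1 = 0"
  and Fpos: "\<And>s. 0 \<le> s \<Longrightarrow> s < 1 \<Longrightarrow> F s > 0"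
  and Fanti: "\<And>s t. 0 \<le> s \<Longrightarrow> s \<le> t \<Longrightarrow> t \<le> 1 \<Longrightarrow> F t \<le> F s"
  and Fmono: "\<And>s t. 1 \<le> s \<Longrightarrow> s \<le> t \<Longrightarrow> F s \<le> F t"
  and gmono: "\<And>s t. 0 \<le> s \<Longrightarrow> s \<le> t \<Longrightarrow> t < 1 \<Longrightarrow> F s / (1-s)^2 \<le> F t/(1-t)^2"
  shows "metric_on_nonneg (\<lambda>x y. sqrt (h x y))"
proof -
  have h00: "h 0 0 = 0" using hom[of 2 0 0] by simp
  have key: "h (u^2) (v^2) = v^2 * F (u/v)" if "0 \<le> u" "0 < v" for u v
  proof -
    have "h (u^2) (v^2) = h (v^2 * (u/v)^2) (v^2 * 1)" using that by (simp add: field_simps)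
    also have "\<dots> = v^2 * h ((u/v)^2) 1" using that by (intro hom) auto
    finally show ?thesis using that Fdef[of "u/v"] by simp
  qed
  have Fnn: "F s \<ge> 0" if "0 \<le> s" for s
    using Fpos[of s] Fmono[of 1 s] F1 that by (cases "s < 1") auto
  have hnn: "h (u^2) (v^2) \<ge> 0" if "0 \<le> u" "0 \<le> v" for u v
  proof (cases "v = 0")
    case True
    then show ?thesis
    proof (cases "u = 0")
      case False
      then have "h (u^2) (v^2) = h (v^2) (u^2)" using sym by simp
      also have "\<dots> = u^2 * F (v/u)" using key[of v u] that False by simp
      finally show ?thesis using Fnn[of "v/u"] that by simp
    qed (simp add: h00)
  next
    case False then show ?thesis using key[of u v] Fnn[of "u/v"] that by simp
  qed
  have hpos: "h (u^2) (v^2) > 0" if "0 \<le> u" "u < v" for u v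
    using key[of u v] Fpos[of "u/v"] that by simp
  have hpos': "h (u^2) (v^2) > 0" if "0 \<le> u" "0 \<le> v" "u \<noteq> v" for u v
  proof (cases "u < v")
    case True then show ?thesis using hpos that by blast
  next
    case False
    then have "h (v^2) (u^2) > 0" using hpos[of v u] that by simp
    then show ?thesis using sym[of "u^2" "v^2"] by simp
  qed
  have hdiag: "h r r = 0" if "0 \<le> r" for r
  proof (cases "r = 0")
    case False
    then have "h (r*1) (r*1) = r * h 1 1" using that by (intro hom) auto
    moreover have "h 1 1 = 0" using Fdef[of 1] F1 by simp
    ultimately show ?thesis by simp
  qed (simp add: h00)
  define G where "G s = F s / (1-s)^2" for s
  have Gnn: "G s \<ge> 0" if "0 \<le> s" "s < 1" for s
    unfolding G_def using Fpos[of s] that by simp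
  have sqk: "sqrt (h (u^2) (v^2)) = (v - u) * sqrt (G (u/v))" if "0 \<le> u" "u < v" for u v
  proof -
    have "v \<noteq> 0" using that by auto
    have e1: "1 - u/v = (v-u)/v" using \<open>v\<noteq>0\<close> by (simp add: field_simps)
    have "v - u \<noteq> 0" using that by simp
    then have "(v-u)^2 * G (u/v) = v^2 * F (u/v)"
      unfolding G_def e1 using \<open>v\<noteq>0\<close> by (simp add: power_divide)
    then have "h (u^2) (v^2) = (v-u)^2 * G (u/v)"
      using key[of u v] that by simp
    then show ?thesis using that by (simp add: real_sqrt_mult)
  qed
  have mid: "sqrt (h (a^2) (c^2)) \<le> sqrt (h (a^2) (b^2)) + sqrt (h (b^2) (c^2))"
    if "0 \<le> a" "a \<le> b" "b \<le> c" for a b c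
  proof (cases "a = b \<or> b = c")
    case True then show ?thesis using hdiag by auto
  next
    case False
    then have ab: "a < b" "b < c" using that by auto
    have "a/c \<le> a/b" using ab that by (intro divide_left_mono) auto
    then have G1: "G (a/c) \<le> G (a/b)" unfolding G_def
      using ab that by (intro gmono) auto
    have G2: "G (a/c) \<le> G (b/c)" unfolding G_def
      using ab that by (intro gmono) (auto simp: divide_le_eq divide_right_mono)
    have "sqrt (h (a^2) (c^2)) = (b-a) * sqrt (G (a/c)) + (c-b) * sqrt (G (a/c))"
      using sqk[of a c] ab that by (simp add: algebra_simps)
    also have "\<dots> \<le> (b-a) * sqrt (G (a/b)) + (c-b) * sqrt (G (b/c))"
      using G1 G2 ab by (intro add_mono mult_left_mono) auto
    also have "\<dots> = sqrt (h (a^2) (b^2)) + sqrt (h (b^2) (c^2))"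
      using sqk[of a b] sqk[of b c] ab that by simp
    finally show ?thesis .
  qed
  have out1: "h (b^2) (c^2) \<le> h (a^2) (c^2)" if "0 \<le> a" "a \<le> b" "b \<le> c" for a b c
  proof (cases "c = 0")
    case True then have "a = 0" "b = 0" using that by auto
    then show ?thesis by simp
  next
    case False
    then show ?thesis using key[of a c] key[of b c] that Fanti[of "a/c" "b/c"]
      by (auto intro!: mult_left_mono divide_right_mono simp: divide_le_eq)
  qed
  have out2: "h (a^2) (b^2) \<le> h (a^2) (c^2)" if "0 \<le> a" "a \<le> b" "b \<le> c" for a b c
  proof (cases "a = 0")
    case True
    show ?thesis
    proof (cases "b = 0")
      case True then show ?thesis using \<open>a = 0\<close> hnn[of 0 c] that by (simp add: h00)
    next
      case False
      then have "h (a^2) (b^2) = b^2 * F 0" "h (a^2) (c^2) = c^2 * F 0"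
        using key[of 0 b] key[of 0 c] \<open>a=0\<close> that by auto
      then show ?thesis using Fnn[of 0] that by (auto intro!: mult_right_mono power_mono)
    qed
  next
    case False
    then have "h (a^2) (b^2) = a^2 * F (b/a)" "h (a^2) (c^2) = a^2 * F (c/a)"
      using key[of b a] key[of c a] sym[of "a^2" "b^2"] sym[of "a^2" "c^2"] that by auto
    then show ?thesis using that False Fmono[of "b/a" "c/a"]
      by (auto intro!: mult_left_mono divide_right_mono simp: le_divide_eq)
  qed
  let ?D = "\<lambda>x y. sqrt (h x y)"
  have tri: "?D x z \<le> ?D x y + ?D y z" if "0 \<le> x" "0 \<le> y" "0 \<le> z" for x y z
  proof -
    define a b c where "a = sqrt x" "b = sqrt y" "c = sqrt z"
    have abc: "x = a^2" "y = b^2" "z = c^2" "0 \<le> a" "0 \<le> b" "0 \<le> c"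
      using that by (auto simp: a_b_c_def)
    have symq: "h (u^2) (v^2) = h (v^2) (u^2)" for u v using sym by simp
    have nn: "?D (u^2) (v^2) \<ge> 0" if "0\<le>u" "0\<le>v" for u v using hnn[OF that] by simp
    have "?D (a^2) (c^2) \<le> ?D (a^2) (b^2) + ?D (b^2) (c^2)"
    proof -
      consider "a \<le> b" "b \<le> c" | "c \<le> b" "b \<le> a" | "a \<le> c" "c \<le> b" | "c \<le> a" "a \<le> b"
        | "b \<le> a" "a \<le> c" | "b \<le> c" "c \<le> a" by linarith
      then show ?thesis
      proof cases
        case 1 then show ?thesis using mid[of a b c] abc by simp
      next
        case 2 then show ?thesis using mid[of c b a] abc symq by (simp add: add.commute)
      next
        case 3
        then have "sqrt (h (a^2) (c^2)) \<le> sqrt (h (a^2) (b^2))" using abc by (intro real_sqrt_le_mono out2) auto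
        moreover have "sqrt (h (b^2) (c^2)) \<ge> 0" using nn[of b c] abc by blast
        ultimately show ?thesis by linarith
      next
        case 4
        then have "sqrt (h (c^2) (a^2)) \<le> sqrt (h (c^2) (b^2))" using abc by (intro real_sqrt_le_mono out2) auto
        moreover have "sqrt (h (a^2) (b^2)) \<ge> 0" using nn[of a b] abc by blast
        ultimately show ?thesis using symq[of a c] symq[of b c] by (simp only:)
      next
        case 5
        then have "sqrt (h (a^2) (c^2)) \<le> sqrt (h (b^2) (c^2))" using abc by (intro real_sqrt_le_mono out1) auto
        moreover have "sqrt (h (a^2) (b^2)) \<ge> 0" using nn[of a b] abc by blast
        ultimately show ?thesis by linarith
      next
        case 6
        then have "sqrt (h (c^2) (a^2)) \<le> sqrt (h (b^2) (a^2))" using abc by (intro real_sqrt_le_mono out1) auto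
        moreover have "sqrt (h (b^2) (c^2)) \<ge> 0" using nn[of b c] abc by blast
        ultimately show ?thesis using symq[of a c] symq[of b a] by (simp only:)
      qed
    qed
    then show ?thesis using abc by simp
  qed
  show ?thesis unfolding metric_on_nonneg_def
  proof (intro conjI allI impI)
    fix x y :: real assume xy: "0 \<le> x" "0 \<le> y"
    show "(sqrt (h x y) = 0) = (x = y)"
    proof
      assume "sqrt (h x y) = 0"
      then have "h (sqrt x ^2) (sqrt y ^2) = 0" using xy by simp
      then show "x = y" using hpos'[of "sqrt x" "sqrt y"] xy by fastforce
    next
      assume "x = y" then show "sqrt (h x y) = 0" using hdiag xy by simp
    qed
    show "sqrt (h x y) = sqrt (h y x)" using sym xy by simp
  next
    fix x y z :: real assume "0 \<le> x" "0 \<le> y" "0 \<le> z"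
    then show "sqrt (h x z) \<le> sqrt (h x y) + sqrt (h y z)" using tri by blast
  qed
qed

lemma metric_from_derivs:
  fixes h :: "real \<Rightarrow> real \<Rightarrow> real" and F Fa Fb Fc :: "real \<Rightarrow> real"
  assumes sym: "\<And>r t. 0\<le>r \<Longrightarrow> 0\<le>t \<Longrightarrow> h r t = h t r"
  and hom: "\<And>c r t. 0<c \<Longrightarrow> 0\<le>r \<Longrightarrow> 0\<le>t \<Longrightarrow> h (c*r) (c*t) = c * h r t"
  and Fdef: "\<And>s. F s = h (s^2) 1"
  and d0: "\<And>s. 0<s \<Longrightarrow> (F has_real_derivative Fa s) (at s)"
  and d1: "\<And>s. 0<s \<Longrightarrow> (Fa has_real_derivative Fb s) (at s)"
  and d2: "\<And>s. 0<s \<Longrightarrow> (Fb has_real_derivative Fc s) (at s)"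
  and e0: "F 1 = 0" and e1: "Fa 1 = 0" and pos3: "\<And>s. 0<s \<Longrightarrow> s<1 \<Longrightarrow> Fc s > 0"
  and neg1: "\<And>s. 0<s \<Longrightarrow> s<1 \<Longrightarrow> Fa s \<le> 0"
  and pos1: "\<And>s. 1<s \<Longrightarrow> Fa s \<ge> 0"
  and cont: "continuous_on {0..} F"
  and F0: "F 0 > 0"
  shows "metric_on_nonneg (\<lambda>x y. sqrt (h x y))"
proof (rule metric_from_F[where h=h and F=F, OF sym hom])
  have cont1: "continuous_on {0..1} F" using cont by (rule continuous_on_subset) auto
  have gs: "F a / (1-a)^2 < F b / (1-b)^2" if "0 \<le> a" "a < b" "b < 1" for a b
    by (rule g_strict[OF d0 d1 d2 e0 e1 pos3 cont1 that])
  show "F s = h (s^2) 1" for s by (rule Fdef)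
  show "F 1 = 0" by (rule e0)
  show "F s > 0" if "0 \<le> s" "s < 1" for s
  proof (cases "s = 0")
    case True then show ?thesis using F0 by simp
  next
    case False
    then have "F 0 / (1-0)^2 < F s / (1-s)^2" using gs[of 0 s] that by simp
    then have "0 < F s / (1-s)^2" using F0 by simp
    then show ?thesis using that by (simp add: zero_less_divide_iff)
  qed
  show "F t \<le> F s" if "0 \<le> s" "s \<le> t" "t \<le> 1" for s t
  proof -
    have "F s \<ge> F t"
    proof (rule DERIV_nonpos_imp_decreasing_open[OF \<open>s \<le> t\<close>])
      fix x assume "s < x" "x < t"
      then show "\<exists>y. DERIV F x :> y \<and> y \<le> 0" using d0[of x] neg1[of x] that by auto
    next
      show "continuous_on {s..t} F" by (rule continuous_on_subset[OF cont]) (use that in auto)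
    qed
    then show ?thesis by simp
  qed
  show "F s \<le> F t" if "1 \<le> s" "s \<le> t" for s t
  proof (rule DERIV_nonneg_imp_increasing_open[OF \<open>s \<le> t\<close>])
    fix x assume "s < x" "x < t"
    then show "\<exists>y. DERIV F x :> y \<and> y \<ge> 0" using d0[of x] pos1[of x] that by auto
  next
    show "continuous_on {s..t} F" by (rule continuous_on_subset[OF cont]) (use that in auto)
  qed
  show "F s / (1-s)^2 \<le> F t / (1-t)^2" if "0 \<le> s" "s \<le> t" "t < 1" for s t
    using gs[of s t] that by (cases "s = t") auto
qed

definition W :: "real \<Rightarrow> real \<Rightarrow> real" where "W q s = s powr (2*q)"
definition Nn :: "real \<Rightarrow> real \<Rightarrow> real" where "Nn q s = ((1 + W q s)/2) powr (1/q)"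
definition Rr :: "real \<Rightarrow> real \<Rightarrow> real" where "Rr q s = 2 * W q s / (1 + W q s)"
definition Ps :: "real \<Rightarrow> real \<Rightarrow> real" where "Ps q s = Nn q s * Rr q s / s^2"

lemma W_pos: "0 < s \<Longrightarrow> 0 < W q s" by (simp add: W_def)
lemma Nn_pos: "0 < s \<Longrightarrow> 0 < Nn q s"
  unfolding Nn_def using W_pos[of s q] by simp
lemma Rr_pos: "0 < s \<Longrightarrow> 0 < Rr q s"
  unfolding Rr_def using W_pos[of s q] by simp
lemma Rr_lt2: "0 < s \<Longrightarrow> Rr q s < 2"
  unfolding Rr_def using W_pos[of s q] by (simp add: divide_less_eq)
lemma Ps_pos: "0 < s \<Longrightarrow> 0 < Ps q s"
  unfolding Ps_def using Nn_pos[of s q] Rr_pos[of s q] by simp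

lemma dW: "0 < s \<Longrightarrow> (W q has_real_derivative 2*q*W q s / s) (at s)"
proof -
  assume s: "0 < s"
  have "((\<lambda>s. s powr (2*q)) has_real_derivative (2*q) * s powr (2*q - 1)) (at s)"
    by (rule has_real_derivative_powr[OF s])
  moreover have "s powr (2*q - 1) = W q s / s" using s by (simp add: W_def powr_diff)
  ultimately show ?thesis unfolding W_def[abs_def] by simp
qed

lemma dN: "0 < s \<Longrightarrow> q \<noteq> 0 \<Longrightarrow> (Nn q has_real_derivative Nn q s * Rr q s / s) (at s)"
proof -
  assume s: "0 < s" and q: "q \<noteq> 0"
  let ?g = "\<lambda>s. (1 + W q s)/2"
  have g: "(?g has_real_derivative q * W q s / s) (at s)"
    using dW[OF s, of q] by (auto intro!: derivative_eq_intros)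
  have gp: "?g s > 0" using W_pos[OF s, of q] by simp
  have "((\<lambda>s. ?g s powr (1/q)) has_real_derivative (1/q) * ?g s powr (1/q - of_nat 1) * (q * W q s / s)) (at s)"
    by (rule DERIV_fun_powr[OF g gp])
  moreover have "?g s powr (1/q - of_nat 1) = ?g s powr (1/q) / ?g s"
    using gp by (subst powr_diff) simp
  moreover have "(1/q) * (?g s powr (1/q) / ?g s) * (q * W q s / s) = Nn q s * Rr q s / s"
  proof -
    have "s + s * W q s > 0" "q * s + q * (s * W q s) \<noteq> 0" using s W_pos[OF s, of q] q
      by (auto simp: add_pos_pos) (metis add_pos_pos mult_eq_0_iff distrib_left less_numeral_extra(3) mult_pos_pos)
    then show ?thesis using gp q s W_pos[OF s, of q] by (simp add: Nn_def Rr_def field_simps)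
  qed
  ultimately show ?thesis unfolding Nn_def[abs_def] by metis
qed

lemma dR: "0 < s \<Longrightarrow> (Rr q has_real_derivative q * Rr q s * (2 - Rr q s) / s) (at s)"
proof -
  assume s: "0 < s"
  have wp: "W q s > 0" using W_pos[OF s] .
  have "((\<lambda>s. 2 * W q s / (1 + W q s)) has_real_derivative
     ((2 * (2*q*W q s / s)) * (1 + W q s) - 2 * W q s * (2*q*W q s / s)) / ((1 + W q s) * (1 + W q s))) (at s)"
    using wp by (intro DERIV_divide DERIV_cmult dW[OF s] DERIV_add[OF DERIV_const dW[OF s], simplified]) auto
  moreover have "((2 * (2*q*W q s / s)) * (1 + W q s) - 2 * W q s * (2*q*W q s / s)) / ((1 + W q s) * (1 + W q s))
     = q * Rr q s * (2 - Rr q s) / s"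
    using wp s by (simp add: Rr_def field_simps)
  ultimately show ?thesis unfolding Rr_def[abs_def] by simp
qed

lemma dP: "0 < s \<Longrightarrow> q \<noteq> 0 \<Longrightarrow> (Ps q has_real_derivative Ps q s * (q-1) * (2 - Rr q s) / s) (at s)"
proof -
  assume s: "0 < s" and q: "q \<noteq> 0"
  have "((\<lambda>s. Nn q s * Rr q s / s^2) has_real_derivative
     ((Nn q s * Rr q s / s * Rr q s + q * Rr q s * (2 - Rr q s) / s * Nn q s) * s^2 - Nn q s * Rr q s * (2 * s)) / (s^2 * s^2)) (at s)"
    using s by (intro DERIV_divide DERIV_mult dN dR q) (auto intro!: derivative_eq_intros)
  moreover have "((Nn q s * Rr q s / s * Rr q s + q * Rr q s * (2 - Rr q s) / s * Nn q s) * s^2 - Nn q s * Rr q s * (2 * s)) / (s^2 * s^2)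
     = Ps q s * (q-1) * (2 - Rr q s) / s"
    using s by (simp add: Ps_def field_simps power2_eq_square power3_eq_cube)
  ultimately show ?thesis unfolding Ps_def[abs_def] by simp
qed

definition Fg :: "real \<Rightarrow> real \<Rightarrow> real" where "Fg p s = (2/p)*((1+s^2)/2 - Nn (1-p) s)"
definition Fg1 :: "real \<Rightarrow> real \<Rightarrow> real" where "Fg1 p s = (2/p)*(s - s * Ps (1-p) s)"
definition Fg2 :: "real \<Rightarrow> real \<Rightarrow> real" where
  "Fg2 p s = (2/p)*(1 - Ps (1-p) s * (2*(1-p) - 1 - ((1-p) - 1) * Rr (1-p) s))"
definition Fg3 :: "real \<Rightarrow> real \<Rightarrow> real" where
  "Fg3 p s = 2 * Ps (1-p) s * (2 - Rr (1-p) s) * (2*(1-p) - 1) * (1 - Rr (1-p) s) / s"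

lemma dFg: "0 < s \<Longrightarrow> p \<noteq> 1 \<Longrightarrow> p \<noteq> 0 \<Longrightarrow> (Fg p has_real_derivative Fg1 p s) (at s)"
proof -
  assume s: "0 < s" and p: "p \<noteq> 1" and p0: "p \<noteq> 0"
  have "((\<lambda>s. (2/p)*((1+s^2)/2 - Nn (1-p) s)) has_real_derivative (2/p)*((2 * s)/2 - Nn (1-p) s * Rr (1-p) s / s)) (at s)"
    using s p p0 by (auto intro!: derivative_eq_intros dN)
  moreover have "Nn (1-p) s * Rr (1-p) s / s = s * Ps (1-p) s" using s by (simp add: Ps_def power2_eq_square)
  ultimately show ?thesis unfolding Fg_def[abs_def] Fg1_def by simp
qed

lemma dFg1: "0 < s \<Longrightarrow> p \<noteq> 1 \<Longrightarrow> p \<noteq> 0 \<Longrightarrow> (Fg1 p has_real_derivative Fg2 p s) (at s)"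
proof -
  assume s: "0 < s" and p: "p \<noteq> 1" and p0: "p \<noteq> 0"
  have "((\<lambda>s. (2/p)*(s - s * Ps (1-p) s)) has_real_derivative (2/p)*(1 - (1 * Ps (1-p) s + (Ps (1-p) s * ((1-p)-1) * (2 - Rr (1-p) s) / s) * s))) (at s)"
    using s p p0 by (auto intro!: derivative_eq_intros dP simp: field_simps)
  moreover have "(2/p)*(1 - (1 * Ps (1-p) s + (Ps (1-p) s * ((1-p)-1) * (2 - Rr (1-p) s) / s) * s)) = Fg2 p s"
    using s p0 unfolding Fg2_def by (simp add: field_simps)
  ultimately show ?thesis unfolding Fg1_def[abs_def] by simp
qed

lemma aux3: fixes P R s p :: real assumes "s \<noteq> 0" "p \<noteq> 0"
 shows "(2/p)*(0 - ((P * ((1-p)-1) * (2 - R) / s) * (2*(1-p) - 1 - ((1-p) - 1) * R)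
        + (0 - ((1-p) - 1) * ((1-p) * R * (2 - R) / s)) * P)) = 2 * P * (2 - R) * (2*(1-p) - 1) * (1 - R) / s"
  using assms by (simp add: field_simps)

lemma dFg2: "0 < s \<Longrightarrow> p \<noteq> 1 \<Longrightarrow> p \<noteq> 0 \<Longrightarrow> (Fg2 p has_real_derivative Fg3 p s) (at s)"
proof -
  assume s: "0 < s" and p: "p \<noteq> 1" "p \<noteq> 0"
  let ?q = "1 - p"
  have "((\<lambda>s. (2/p)*(1 - Ps ?q s * (2*?q - 1 - (?q - 1) * Rr ?q s))) has_real_derivative
     (2/p)*(0 - ((Ps ?q s * (?q-1) * (2 - Rr ?q s) / s) * (2*?q - 1 - (?q - 1) * Rr ?q s)
        + (0 - (?q - 1) * (?q * Rr ?q s * (2 - Rr ?q s) / s)) * Ps ?q s))) (at s)"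
    using s p by (auto intro!: derivative_eq_intros dP dR simp: field_simps)
  moreover have "(2/p)*(0 - ((Ps ?q s * (?q-1) * (2 - Rr ?q s) / s) * (2*?q - 1 - (?q - 1) * Rr ?q s)
        + (0 - (?q - 1) * (?q * Rr ?q s * (2 - Rr ?q s) / s)) * Ps ?q s)) = Fg3 p s"
    using s p unfolding Fg3_def by (intro aux3) auto
  ultimately show ?thesis unfolding Fg2_def[abs_def] by simp
qed

lemma sq_powr: "0 < (s::real) \<Longrightarrow> (s^2) powr q = s powr (2*q)"
proof -
  assume s: "0 < s"
  have "s powr 2 = s^2" using powr_realpow[of s 2] s by simp
  then show ?thesis by (metis powr_powr)
qed

lemma Fh_eq: "0 < s \<Longrightarrow> p \<noteq> 0 \<Longrightarrow> p \<noteq> 1 \<Longrightarrow> H p (s^2) 1 = Fg p s"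
  unfolding H_def Fg_def power_mean_def Nn_def W_def
  by (simp add: sq_powr add.commute)

lemma Ps_powr: "0 < s \<Longrightarrow> q \<noteq> 0 \<Longrightarrow> Ps q s = Rr q s powr (1 - 1/q)"
proof -
  assume s: "0 < s" and q: "q \<noteq> 0"
  define A where "A = (1 + W q s)/2"
  have Ap: "A > 0" using W_pos[OF s, of q] by (simp add: A_def)
  have wp: "W q s > 0" using W_pos[OF s] .
  have R: "Rr q s = W q s / A" by (simp add: Rr_def A_def)
  have ws: "W q s powr (1/q) = s^2"
  proof -
    have "W q s powr (1/q) = s powr 2" using q by (simp add: W_def powr_powr)
    also have "\<dots> = s^2" using powr_realpow[of s 2] s by simp
    finally show ?thesis .
  qed
  have "Rr q s powr (1 - 1/q) = Rr q s / Rr q s powr (1/q)"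
    using Rr_pos[OF s, of q] by (simp add: powr_diff)
  also have "Rr q s powr (1/q) = s^2 / Nn q s"
  proof -
    have "Rr q s powr (1/q) = W q s powr (1/q) / A powr (1/q)" unfolding R by (rule powr_divide)
    moreover have "Nn q s = A powr (1/q)" by (simp add: Nn_def A_def)
    ultimately show ?thesis using ws by simp
  qed
  finally show ?thesis using s Nn_pos[OF s, of q] by (simp add: Ps_def)
qed

lemma Fg_1: "Fg p 1 = 0" "Fg1 p 1 = 0"
  by (simp_all add: Fg_def Fg1_def Nn_def W_def Ps_def Rr_def)

lemma powr_gt1_iff_aux:
  fixes R k :: real assumes "0 < R"
  shows "R powr k > 1 \<longleftrightarrow> k * ln R > 0" and "R powr k < 1 \<longleftrightarrow> k * ln R < 0"
  using assms by (simp_all add: powr_def)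

lemma pm_sym: "power_mean q r t = power_mean q t r"
  unfolding power_mean_def by (auto simp: mult.commute add.commute)

lemma H_sym: "H p r t = H p t r"
  unfolding H_def using pm_sym by (auto simp: add.commute)

lemma pm_hom:
  assumes c: "0 < c" and r: "0 \<le> r" and t: "0 \<le> t"
  shows "power_mean q (c*r) (c*t) = c * power_mean q r t"
proof -
  consider "q = 0" | "q \<noteq> 0" "q < 0 \<and> (r = 0 \<or> t = 0)" | "q \<noteq> 0" "\<not> (q < 0 \<and> (r = 0 \<or> t = 0))" by blast
  then show ?thesis
  proof cases
    case 1
    then show ?thesis using c r t
      by (simp add: power_mean_def real_sqrt_mult mult.assoc mult.left_commute[of c r])
  next
    case 2
    then show ?thesis using c by (auto simp: power_mean_def)
  next
    case 3
    have "((c*r) powr q + (c*t) powr q)/2 = c powr q * ((r powr q + t powr q)/2)"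
      by (simp add: powr_mult field_simps)
    then have "(((c*r) powr q + (c*t) powr q)/2) powr (1/q) = (c powr q) powr (1/q) * ((r powr q + t powr q)/2) powr (1/q)"
      by (simp only: powr_mult)
    also have "(c powr q) powr (1/q) = c" using 3 c by (simp add: powr_powr)
    finally show ?thesis using 3 c by (auto simp: power_mean_def)
  qed
qed

lemma xlnx_hom: "0 < c \<Longrightarrow> 0 \<le> r \<Longrightarrow> xlnx (c*r) = c * xlnx r + c * r * ln c"
  by (auto simp: xlnx_def ln_mult algebra_simps)

lemma H_hom:
  assumes c: "0 < c" and r: "0 \<le> r" and t: "0 \<le> t"
  shows "H p (c*r) (c*t) = c * H p r t"
proof (cases "p = 0")
  case True
  show ?thesis
  proof (cases "r + t = 0")
    case True
    then have "r = 0" "t = 0" using r t by auto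
    then show ?thesis using \<open>p=0\<close> by (simp add: H_def xlnx_def)
  next
    case False
    then have pos: "r + t > 0" using r t by auto
    have "ln ((c*r + c*t)/2) = ln c + ln ((r+t)/2)"
    proof -
      have "ln ((c*r + c*t)/2) = ln (c * ((r+t)/2))" by (rule arg_cong[where f=ln]) (simp add: algebra_simps)
      also have "\<dots> = ln c + ln ((r+t)/2)" using pos c by (intro ln_mult_pos) auto
      finally show ?thesis .
    qed
    moreover have "c*r + c*t \<noteq> 0" using pos c by (simp add: distrib_left[symmetric])
    ultimately show ?thesis using \<open>p=0\<close> False xlnx_hom[OF c r] xlnx_hom[OF c t]
      unfolding H_def by (simp add: algebra_simps)
  qed
next
  case False
  then show ?thesis using pm_hom[OF c r t] by (simp add: H_def algebra_simps)
qed

lemma W_exp: "0 < s \<Longrightarrow> W q s = exp (2*q*ln s)"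
  by (simp add: W_def powr_def mult.commute)

lemma R_lt1_iff: "0 < s \<Longrightarrow> Rr q s < 1 \<longleftrightarrow> W q s < 1"
  using W_pos[of s q] by (simp add: Rr_def divide_less_eq)
lemma R_gt1_iff: "0 < s \<Longrightarrow> Rr q s > 1 \<longleftrightarrow> W q s > 1"
  using W_pos[of s q] by (simp add: Rr_def less_divide_eq)

lemma W_lt1_iff: "0 < s \<Longrightarrow> W q s < 1 \<longleftrightarrow> q * ln s < 0"
  by (simp add: W_exp mult.assoc)
lemma W_gt1_iff: "0 < s \<Longrightarrow> W q s > 1 \<longleftrightarrow> q * ln s > 0"
  by (simp add: W_exp mult.assoc)

lemma lnR_sign:
  assumes q: "q \<noteq> 0" and s: "0 < s"
  shows "s < 1 \<Longrightarrow> ln (Rr q s) / q < 0" and "1 < s \<Longrightarrow> ln (Rr q s) / q > 0"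
proof -
  have Rp: "Rr q s > 0" using Rr_pos[OF s] .
  assume s1: "s < 1"
  then have ls: "ln s < 0" using s by simp
  show "ln (Rr q s) / q < 0"
  proof (cases "q > 0")
    case True
    then have "q * ln s < 0" using ls by (simp add: mult_pos_neg)
    then have "Rr q s < 1" using R_lt1_iff[OF s] W_lt1_iff[OF s] by simp
    then have "ln (Rr q s) < 0" using Rp by simp
    then show ?thesis using True by (simp add: divide_neg_pos)
  next
    case False
    then have "q < 0" using q by simp
    then have "q * ln s > 0" using ls by (simp add: mult_neg_neg)
    then have "Rr q s > 1" using R_gt1_iff[OF s] W_gt1_iff[OF s] by simp
    then have "ln (Rr q s) > 0" using Rp by simp
    then show ?thesis using \<open>q<0\<close> by (simp add: divide_pos_neg)
  qed
next
  have Rp: "Rr q s > 0" using Rr_pos[OF s] .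
  assume s1: "1 < s"
  then have ls: "ln s > 0" using s by simp
  show "ln (Rr q s) / q > 0"
  proof (cases "q > 0")
    case True
    then have "q * ln s > 0" using ls by simp
    then have "Rr q s > 1" using R_gt1_iff[OF s] W_gt1_iff[OF s] by simp
    then have "ln (Rr q s) > 0" using Rp by simp
    then show ?thesis using True by simp
  next
    case False
    then have "q < 0" using q by simp
    then have "q * ln s < 0" using ls by (simp add: mult_neg_pos)
    then have "Rr q s < 1" using R_lt1_iff[OF s] W_lt1_iff[OF s] by simp
    then have "ln (Rr q s) < 0" using Rp by simp
    then show ?thesis using \<open>q<0\<close> by (simp add: divide_neg_neg)
  qed
qed

lemma Ps_exp:
  assumes p: "p \<noteq> 0" "p \<noteq> 1" and s: "0 < s"
  shows "Ps (1-p) s = exp (- p * (ln (Rr (1-p) s) / (1-p)))"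
proof -
  have "Ps (1-p) s = Rr (1-p) s powr (1 - 1/(1-p))" using Ps_powr[OF s] p by simp
  also have "\<dots> = exp ((1 - 1/(1-p)) * ln (Rr (1-p) s))" using Rr_pos[OF s, of "1-p"] by (simp add: powr_def)
  also have "(1 - 1/(1-p)) * ln (Rr (1-p) s) = - p * (ln (Rr (1-p) s) / (1-p))"
    using p by (simp add: field_simps)
  finally show ?thesis .
qed

lemma Fg1_eq: "Fg1 p s = (2/p) * (s * (1 - Ps (1-p) s))"
  by (simp add: Fg1_def right_diff_distrib)

lemma Fg1_neg:
  assumes p: "p \<noteq> 0" "p \<noteq> 1" and s: "0 < s" "s < 1"
  shows "Fg1 p s < 0"
proof -
  define L where "L = ln (Rr (1-p) s) / (1-p)"
  have l: "L < 0" unfolding L_def using lnR_sign(1)[of "1-p" s] p s by simp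
  have PsL: "Ps (1-p) s = exp (- p * L)" unfolding L_def by (rule Ps_exp[OF p s(1)])
  show ?thesis
  proof (cases "p > 0")
    case True
    then have "- p * L > 0" using l by (simp add: mult_pos_neg)
    then have "Ps (1-p) s > 1" using PsL by simp
    then have a: "s * (1 - Ps (1-p) s) < 0" using s by (simp add: mult_pos_neg)
    have "2/p > 0" using True by simp
    then show ?thesis unfolding Fg1_eq using a by (rule mult_pos_neg)
  next
    case False
    then have pn: "p < 0" using p by simp
    then have "- p * L < 0" using l by (simp add: mult_neg_neg)
    then have "Ps (1-p) s < 1" using PsL by simp
    then have a: "s * (1 - Ps (1-p) s) > 0" using s by simp
    have "2/p < 0" using pn by simp
    then show ?thesis unfolding Fg1_eq using a by (rule mult_neg_pos)
  qed
qed

lemma Fg1_pos: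
  assumes p: "p \<noteq> 0" "p \<noteq> 1" and s: "1 < s"
  shows "Fg1 p s > 0"
proof -
  have s0: "0 < s" using s by simp
  define L where "L = ln (Rr (1-p) s) / (1-p)"
  have l: "L > 0" unfolding L_def using lnR_sign(2)[of "1-p" s] p s by simp
  have PsL: "Ps (1-p) s = exp (- p * L)" unfolding L_def by (rule Ps_exp[OF p s0])
  show ?thesis
  proof (cases "p > 0")
    case True
    then have "- p * L < 0" using l by (simp add: mult_pos_pos)
    then have "Ps (1-p) s < 1" using PsL by simp
    then show ?thesis unfolding Fg1_eq using True s by simp
  next
    case False
    then have pn: "p < 0" using p by simp
    then have "- p * L > 0" using l by (simp add: mult_neg_pos)
    then have "Ps (1-p) s > 1" using PsL by simp
    then have a: "s * (1 - Ps (1-p) s) < 0" using s by (simp add: mult_pos_neg)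
    have "2/p < 0" using pn by simp
    then show ?thesis unfolding Fg1_eq using a by (rule mult_neg_neg)
  qed
qed

lemma Fg3_sign:
  assumes p: "p \<noteq> 0" "p \<noteq> 1" and s: "0 < s" "s < 1"
  shows "(p < 1/2 \<or> 1 < p) \<Longrightarrow> Fg3 p s > 0" and "1/2 < p \<Longrightarrow> p < 1 \<Longrightarrow> Fg3 p s < 0"
proof -
  have ls: "ln s < 0" using s by simp
  have base: "2 * Ps (1-p) s * (2 - Rr (1-p) s) / s > 0"
    using Ps_pos[OF s(1)] Rr_lt2[OF s(1)] s by simp
  have F3: "Fg3 p s = (2 * Ps (1-p) s * (2 - Rr (1-p) s) / s) * ((2*(1-p) - 1) * (1 - Rr (1-p) s))"
    by (simp add: Fg3_def)
  {
    assume "p < 1/2 \<or> 1 < p"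
    then have "(2*(1-p) - 1) * (1 - Rr (1-p) s) > 0"
    proof
      assume "p < 1/2"
      then have "(1-p) * ln s < 0" using ls by (simp add: mult_pos_neg)
      then have "Rr (1-p) s < 1" using R_lt1_iff[OF s(1)] W_lt1_iff[OF s(1)] by simp
      then show ?thesis using \<open>p < 1/2\<close> by simp
    next
      assume "1 < p"
      then have "(1-p) * ln s > 0" using ls by (simp add: mult_neg_neg)
      then have "Rr (1-p) s > 1" using R_gt1_iff[OF s(1)] W_gt1_iff[OF s(1)] by simp
      then show ?thesis using \<open>1 < p\<close> by (simp add: mult_neg_neg)
    qed
    then show "Fg3 p s > 0" unfolding F3 by (rule mult_pos_pos[OF base])
  }
  {
    assume "1/2 < p" "p < 1"
    then have "(1-p) * ln s < 0" using ls by (simp add: mult_pos_neg)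
    then have "Rr (1-p) s < 1" using R_lt1_iff[OF s(1)] W_lt1_iff[OF s(1)] by simp
    then have "(2*(1-p) - 1) * (1 - Rr (1-p) s) < 0" using \<open>1/2 < p\<close> by (simp add: mult_neg_pos)
    then show "Fg3 p s < 0" unfolding F3 by (rule mult_pos_neg[OF base])
  }
qed

lemma half_powr:
  shows "1 < a \<Longrightarrow> (1/2::real) powr a < 1/2" and "a < 1 \<Longrightarrow> (1/2::real) powr a > 1/2"
proof -
  assume "1 < a"
  then have "(1/2::real) powr a < (1/2) powr 1" by (intro powr_less_mono') auto
  then show "(1/2::real) powr a < 1/2" by simp
next
  assume "a < 1"
  then have "(1/2::real) powr 1 < (1/2) powr a" by (intro powr_less_mono') auto
  then show "(1/2::real) powr a > 1/2" by simp
qed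

lemma pm1: "0 \<le> r \<Longrightarrow> power_mean 1 r 1 = (r + 1)/2"
  by (simp add: power_mean_def)

lemma Fh_formula_pos:
  assumes p: "p \<noteq> 0" "p < 1" and s: "0 \<le> s"
  shows "H p (s^2) 1 = (2/p)*((s^2+1)/2 - (((s^2) powr (1-p) + 1)/2) powr (1/(1-p)))"
  using p s by (simp add: H_def pm1 power_mean_def)

lemma Fh_formula_neg:
  assumes p: "1 < p" and s: "0 \<le> s"
  shows "H p (s^2) 1 = (2/p)*((s^2+1)/2 - s^2 * ((1 + (s^2) powr (p-1))/2) powr (1/(1-p)))"
proof (cases "s = 0")
  case True
  then show ?thesis using p by (simp add: H_def pm1 power_mean_def)
next
  case False
  define t where "t = s^2"
  have t: "t > 0" using False s by (simp add: t_def)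
  let ?q = "1 - p"
  have q: "?q \<noteq> 0" "?q < 0" using p by auto
  have "(t powr ?q + 1)/2 = t powr ?q * ((1 + t powr (p-1))/2)"
  proof -
    have "t powr ?q * t powr (p-1) = 1" using t by (simp add: powr_add[symmetric])
    then show ?thesis by (simp add: algebra_simps add_divide_distrib)
  qed
  then have "((t powr ?q + 1)/2) powr (1/?q) = (t powr ?q) powr (1/?q) * ((1 + t powr (p-1))/2) powr (1/?q)"
    by (simp only: powr_mult)
  also have "(t powr ?q) powr (1/?q) = t" using q t by (simp add: powr_powr)
  finally have e: "((t powr ?q + 1)/2) powr (1/?q) = t * ((1 + t powr (p-1))/2) powr (1/?q)" .
  have "power_mean ?q t 1 = ((t powr ?q + 1)/2) powr (1/?q)"
    using q t by (simp add: power_mean_def)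
  then show ?thesis using p t e s by (simp add: H_def pm1 t_def[symmetric])
qed

lemma cont_eq: "continuous_on S f \<Longrightarrow> (\<And>x. x \<in> S \<Longrightarrow> f x = g x) \<Longrightarrow> continuous_on S g"
  using continuous_on_cong by blast

lemma Fh_cont:
  assumes p: "p \<noteq> 0" "p \<noteq> 1"
  shows "continuous_on {0..} (\<lambda>s. H p (s^2) 1)"
proof (cases "p < 1")
  case True
  have "continuous_on {0..} (\<lambda>s::real. (2/p)*((s^2+1)/2 - (((s^2) powr (1-p) + 1)/2) powr (1/(1-p))))"
  proof -
    have c1: "continuous_on {0..} (\<lambda>s::real. (s^2) powr (1-p))"
      by (rule continuous_on_powr') (use True in \<open>auto intro!: continuous_intros\<close>)
    have "continuous_on {0..} (\<lambda>s::real. (((s^2) powr (1-p) + 1)/2) powr (1/(1-p)))"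
    proof (rule continuous_on_powr)
      show "continuous_on {0..} (\<lambda>s::real. ((s^2) powr (1-p) + 1)/2)" by (intro continuous_on_divide continuous_on_add c1 continuous_on_const) auto
      show "\<forall>x\<in>{0..}. ((x^2) powr (1-p) + 1)/2 \<noteq> (0::real)"
        by (auto simp: add_nonneg_pos) (metis add_nonneg_pos powr_ge_zero zero_less_one less_irrefl)
    qed (rule continuous_on_const)
    then show ?thesis
      by (intro continuous_on_mult[OF continuous_on_const] continuous_on_diff) (auto intro!: continuous_intros)
  qed
  then show ?thesis by (rule cont_eq) (simp add: Fh_formula_pos[OF p(1) True])
next
  case False
  then have p1: "1 < p" using p by simp
  have "continuous_on {0..} (\<lambda>s::real. (2/p)*((s^2+1)/2 - s^2 * ((1 + (s^2) powr (p-1))/2) powr (1/(1-p))))"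
  proof -
    have c1: "continuous_on {0..} (\<lambda>s::real. (s^2) powr (p-1))"
      by (rule continuous_on_powr') (use p1 in \<open>auto intro!: continuous_intros\<close>)
    have "continuous_on {0..} (\<lambda>s::real. ((1 + (s^2) powr (p-1))/2) powr (1/(1-p)))"
    proof (rule continuous_on_powr)
      show "continuous_on {0..} (\<lambda>s::real. (1 + (s^2) powr (p-1))/2)" by (intro continuous_on_divide continuous_on_add c1 continuous_on_const) auto
      show "\<forall>x\<in>{0..}. (1 + (x^2) powr (p-1))/2 \<noteq> (0::real)"
        by (auto simp: add_pos_nonneg) (metis add_pos_nonneg powr_ge_zero zero_less_one less_irrefl)
    qed (rule continuous_on_const)
    then show ?thesis
      by (intro continuous_on_mult[OF continuous_on_const] continuous_on_diff continuous_on_mult) (auto intro!: continuous_intros)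
  qed
  then show ?thesis by (rule cont_eq) (simp add: Fh_formula_neg[OF p1])
qed

lemma Fh_0:
  assumes p: "p \<noteq> 0" "p < 1/2 \<or> 1 < p"
  shows "H p 0 1 > 0"
proof (cases "1 < p")
  case True
  then show ?thesis by (simp add: H_def pm1 power_mean_def)
next
  case False
  then have pl: "p < 1/2" using p by simp
  have e: "H p 0 1 = (2/p) * (1/2 - (1/2) powr (1/(1-p)))"
    using Fh_formula_pos[of p 0] p pl by simp
  show ?thesis
  proof (cases "p > 0")
    case True
    then have "1/(1-p) > 1" using pl by (simp add: field_simps)
    then have "(1/2::real) powr (1/(1-p)) < 1/2" by (rule half_powr)
    then show ?thesis unfolding e using True by simp
  next
    case False
    then have pn: "p < 0" using p by simp
    then have "1/(1-p) < 1" by (simp add: field_simps)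
    then have "(1/2::real) powr (1/(1-p)) > 1/2" by (rule half_powr)
    then show ?thesis unfolding e using pn by (intro mult_neg_neg) auto
  qed
qed

lemma dFh:
  assumes p: "p \<noteq> 0" "p \<noteq> 1" and s: "0 < s"
  shows "((\<lambda>s. H p (s^2) 1) has_real_derivative Fg1 p s) (at s)"
proof (rule has_field_derivative_transform_within_open[OF dFg[OF s p(2) p(1)], of "{0<..}"])
  show "open {0::real<..}" by simp
  show "s \<in> {0<..}" using s by simp
  fix x :: real assume "x \<in> {0<..}"
  then show "Fg p x = H p (x^2) 1" using Fh_eq[of x p] p by simp
qed

lemma general_metric:
  assumes p: "p \<noteq> 0" "p \<noteq> 1" "p < 1/2 \<or> 1 < p"
  shows "metric_on_nonneg (\<lambda>x y. sqrt (H p x y))"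
proof (rule metric_from_derivs[where h = "H p" and F = "\<lambda>s. H p (s^2) 1" and Fa = "Fg1 p" and Fb = "Fg2 p" and Fc = "Fg3 p"])
  show "H p r t = H p t r" for r t by (rule H_sym)
  show "H p (c*r) (c*t) = c * H p r t" if "0 < c" "0 \<le> r" "0 \<le> t" for c r t using H_hom that by blast
  show "H p (s^2) 1 = H p (s^2) 1" for s by simp
  show "((\<lambda>s. H p (s^2) 1) has_real_derivative Fg1 p s) (at s)" if "0 < s" for s using dFh p that by blast
  show "(Fg1 p has_real_derivative Fg2 p s) (at s)" if "0 < s" for s using dFg1 p that by blast
  show "(Fg2 p has_real_derivative Fg3 p s) (at s)" if "0 < s" for s using dFg2 p that by blast
  show "H p (1^2) 1 = 0" using Fh_eq[of 1 p] p Fg_1 by simp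
  show "Fg1 p 1 = 0" by (rule Fg_1)
  show "Fg3 p s > 0" if "0 < s" "s < 1" for s using Fg3_sign(1)[OF p(1,2) that p(3)] .
  show "Fg1 p s \<le> 0" if "0 < s" "s < 1" for s using Fg1_neg[OF p(1,2) that] by simp
  show "Fg1 p s \<ge> 0" if "1 < s" for s using Fg1_pos[OF p(1,2) that] by simp
  show "continuous_on {0..} (\<lambda>s. H p (s^2) 1)" by (rule Fh_cont[OF p(1,2)])
  show "H p (0^2) 1 > 0" using Fh_0[OF p(1) p(3)] by simp
qed

lemma H_sqrtform:
  assumes "p = 1 \<or> p = 1/2" "0 \<le> r" "0 \<le> t"
  shows "H p r t = (sqrt r - sqrt t)^2"
  using assms(1)
proof
  assume p: "p = 1"
  have "power_mean 1 r t = (r + t)/2" using assms by (simp add: power_mean_def)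
  moreover have "power_mean 0 r t = sqrt r * sqrt t" by (simp add: power_mean_def real_sqrt_mult)
  ultimately show ?thesis using p assms by (simp add: H_def power2_eq_square algebra_simps)
next
  assume p: "p = 1/2"
  have "power_mean 1 r t = (r + t)/2" using assms by (simp add: power_mean_def)
  moreover have "power_mean (1/2) r t = ((sqrt r + sqrt t)/2)^2"
  proof -
    have "power_mean (1/2) r t = ((sqrt r + sqrt t)/2) powr 2"
      using assms by (simp add: power_mean_def powr_half_sqrt)
    also have "\<dots> = ((sqrt r + sqrt t)/2)^2"
    proof (cases "(sqrt r + sqrt t)/2 = 0")
      case False
      then have "(sqrt r + sqrt t)/2 > 0" using assms by (simp add: add_nonneg_nonneg) (smt (verit) real_sqrt_ge_zero)
      then show ?thesis using powr_realpow[of "(sqrt r + sqrt t)/2" 2] by simp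
    qed simp
    finally show ?thesis .
  qed
  moreover have "(1 - 1/2::real) = 1/2" by simp
  ultimately show ?thesis unfolding p H_def using assms by (simp add: power2_eq_square algebra_simps)
qed

lemma sqrt_metric:
  assumes "p = 1 \<or> p = 1/2"
  shows "metric_on_nonneg (\<lambda>x y. sqrt (H p x y))"
proof -
  have D: "sqrt (H p x y) = \<bar>sqrt x - sqrt y\<bar>" if "0 \<le> x" "0 \<le> y" for x y
    using H_sqrtform[OF assms that] by simp
  show ?thesis unfolding metric_on_nonneg_def
    by (auto simp: D)
qed

lemma xlnx_eq: "xlnx x = x * ln x" by (simp add: xlnx_def)

lemma xlnx_lim0: "((\<lambda>x::real. x * ln x) \<longlongrightarrow> 0) (at 0 within {0..})"
proof (rule real_tendsto_sandwich[where f = "\<lambda>x. - 2 * sqrt x" and h = "\<lambda>x. 0"])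
  have ev: "eventually (\<lambda>x::real. 0 < x \<and> x < 1) (at 0 within {0..})"
    unfolding eventually_at by (intro exI[of _ 1]) (auto simp: dist_real_def)
  show "eventually (\<lambda>x::real. - 2 * sqrt x \<le> x * ln x) (at 0 within {0..})"
    using ev
  proof (rule eventually_mono)
    fix x :: real assume x: "0 < x \<and> x < 1"
    have sp: "sqrt x > 0" using x by simp
    have "ln (1 / sqrt x) \<le> 1 / sqrt x - 1" using sp by (intro ln_le_minus_one) simp
    then have "- ln (sqrt x) \<le> 1 / sqrt x - 1" using sp by (simp add: ln_div)
    then have "- ln x / 2 \<le> 1 / sqrt x - 1" using x by (simp add: ln_sqrt)
    then have "(- ln x / 2) * 2 \<le> (1 / sqrt x - 1) * 2" by (rule mult_right_mono) simp
    then have "- ln x \<le> 2 * (1 / sqrt x - 1)" by simp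
    then have "x * (- ln x) \<le> x * (2 * (1 / sqrt x - 1))" using x by (intro mult_left_mono) auto
    also have "x * (2 * (1 / sqrt x - 1)) = 2 * (x / sqrt x) - 2 * x" by (simp add: algebra_simps)
    finally have "- x * ln x \<le> 2 * (x / sqrt x) - 2 * x" by simp
    moreover have "x / sqrt x = sqrt x" using x by (intro real_div_sqrt) auto
    ultimately show "- 2 * sqrt x \<le> x * ln x" using x by simp
  qed
  show "eventually (\<lambda>x::real. x * ln x \<le> 0) (at 0 within {0..})"
    unfolding eventually_at by (intro exI[of _ 1]) (auto simp: dist_real_def intro!: mult_nonneg_nonpos)
  show "((\<lambda>x. - 2 * sqrt x) \<longlongrightarrow> 0) (at 0 within {0..})"
    by (auto intro!: tendsto_eq_intros)
qed simp

lemma xlnx_cont: "continuous_on {0..} xlnx"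
  unfolding continuous_on_eq_continuous_within
proof
  fix x :: real assume x: "x \<in> {0..}"
  show "continuous (at x within {0..}) xlnx"
  proof (cases "x = 0")
    case True
    then show ?thesis unfolding continuous_within using xlnx_lim0 by (simp add: xlnx_eq[abs_def] xlnx_def)
  next
    case False
    then have "isCont (\<lambda>x. x * ln x) x" by (auto intro!: continuous_intros)
    then show ?thesis unfolding xlnx_eq[abs_def] by (rule continuous_at_imp_continuous_at_within)
  qed
qed

definition E0 :: "real \<Rightarrow> real" where "E0 s = 2*s^2*ln s - (1+s^2)*(ln (1+s^2) - ln 2)"
definition E1 :: "real \<Rightarrow> real" where "E1 s = 2*s*(ln 2 + 2*ln s - ln (1+s^2))"
definition E2 :: "real \<Rightarrow> real" where "E2 s = 2*(ln 2 + 2*ln s - ln (1+s^2)) + 4/(1+s^2)"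
definition E3 :: "real \<Rightarrow> real" where "E3 s = 4/s - 4*s/(1+s^2) - 8*s/(1+s^2)^2"

lemma one_s2: "(1::real) + s^2 \<noteq> 0" "(1::real) + s^2 > 0"
  using zero_le_power2[of s] by linarith+

lemma aux1: fixes s u :: real assumes "s > 0" "u = 1 + s^2"
  shows "(2/s - 2*s/u) * (2*s) = 4/u"
proof -
  have u: "u > 0" using assms by (simp add: add_pos_nonneg)
  have e: "u = 1 + s^2" by (rule assms(2))
  show ?thesis using u assms(1) apply (simp add: field_simps) using e by algebra
qed

lemma dE0: "0 < s \<Longrightarrow> (E0 has_real_derivative E1 s) (at s)"
  unfolding E0_def[abs_def] E1_def
  using one_s2[of s] apply (auto intro!: derivative_eq_intros)
  apply (simp add: power2_eq_square algebra_simps)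
  done
lemma dE1: "0 < s \<Longrightarrow> (E1 has_real_derivative E2 s) (at s)"
  unfolding E1_def[abs_def] E2_def
  using one_s2[of s] apply (auto intro!: derivative_eq_intros)
  using aux1[of s "1+s^2"] apply simp
  done
lemma dE2: "0 < s \<Longrightarrow> (E2 has_real_derivative E3 s) (at s)"
  unfolding E2_def[abs_def] E3_def
  using one_s2[of s] apply (auto intro!: derivative_eq_intros)
  apply (simp add: power2_eq_square)
  done

lemma H0_eq: "0 < s \<Longrightarrow> H 0 (s^2) 1 = E0 s"
proof -
  assume s: "0 < s"
  have "ln ((s^2+1)/2) = ln (1+s^2) - ln 2" using one_s2[of s] by (simp add: ln_div add.commute)
  moreover have "xlnx (s^2) = 2*s^2*ln s" using s by (simp add: xlnx_def ln_realpow)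
  moreover have "s^2 + 1 \<noteq> 0" using one_s2[of s] by (simp add: add.commute)
  ultimately show ?thesis by (simp add: H_def E0_def xlnx_def add.commute)
qed

lemma E3_pos: "0 < s \<Longrightarrow> s < 1 \<Longrightarrow> E3 s > 0"
proof -
  assume s: "0 < s" "s < 1"
  define u where "u = 1 + s^2"
  have u: "u > 0" using one_s2[of s] by (simp add: u_def)
  have e: "E3 s = 4*(1 - s^2)/(s*u^2)"
  proof -
    have "4/s - 4*s/u - 8*s/u^2 = 4*(1 - s^2)/(s*u^2)"
      using u s apply (simp add: field_simps) using u_def by algebra
    then show ?thesis by (simp add: E3_def u_def)
  qed
  have "s^2 < 1" using s by (simp add: power_less_one_iff abs_less_iff)
  then show ?thesis unfolding e using u s by (intro divide_pos_pos) auto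
qed

lemma E1_sign:
  assumes s: "0 < s"
  shows "s < 1 \<Longrightarrow> E1 s \<le> 0" and "1 < s \<Longrightarrow> E1 s \<ge> 0"
proof -
  have l: "ln 2 + 2*ln s = ln (2*s^2)" using s by (simp add: ln_mult ln_realpow)
  have E: "E1 s = 2*s*(ln (2*s^2) - ln (1+s^2))" unfolding E1_def l[symmetric] by simp
  have p1: "2*s^2 > 0" "1+s^2 > 0" using s one_s2[of s] by auto
  {
    assume "s < 1"
    then have "s^2 < 1" using s by (simp add: power_less_one_iff abs_less_iff)
    then have "ln (2*s^2) \<le> ln (1+s^2)" using p1 by simp
    then show "E1 s \<le> 0" unfolding E using s by (intro mult_nonneg_nonpos) auto
  }
  {
    assume "1 < s"
    then have "s^2 > 1" using s by (simp add: one_less_power)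
    then have "ln (2*s^2) \<ge> ln (1+s^2)" using p1 by simp
    then show "E1 s \<ge> 0" unfolding E using s by simp
  }
qed

lemma H0_cont: "continuous_on {0..} (\<lambda>s. H 0 (s^2) 1)"
proof -
  have c1: "continuous_on {0..} (\<lambda>s::real. xlnx (s^2))"
    by (rule continuous_on_compose2[OF xlnx_cont]) (auto intro!: continuous_intros)
  have c2: "continuous_on {0..} (\<lambda>s::real. xlnx (s^2) - (s^2+1) * ln ((s^2+1)/2))"
    using one_s2 by (intro continuous_intros c1) (auto simp: add.commute)
  show ?thesis
    by (rule cont_eq[OF c2]) (use one_s2 in \<open>auto simp: H_def xlnx_def add.commute\<close>)
qed

lemma zero_metric: "metric_on_nonneg (\<lambda>x y. sqrt (H 0 x y))"
proof (rule metric_from_derivs[where h = "H 0" and F = "\<lambda>s. H 0 (s^2) 1" and Fa = E1 and Fb = E2 and Fc = E3])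
  show "H 0 r t = H 0 t r" for r t by (rule H_sym)
  show "H 0 (c*r) (c*t) = c * H 0 r t" if "0 < c" "0 \<le> r" "0 \<le> t" for c r t using H_hom that by blast
  show "H 0 (s^2) 1 = H 0 (s^2) 1" for s by simp
  show "((\<lambda>s. H 0 (s^2) 1) has_real_derivative E1 s) (at s)" if "0 < s" for s
  proof (rule has_field_derivative_transform_within_open[OF dE0[OF that], of "{0<..}"])
    fix x :: real assume "x \<in> {0<..}"
    then show "E0 x = H 0 (x^2) 1" using H0_eq[of x] by simp
  qed (use that in auto)
  show "(E1 has_real_derivative E2 s) (at s)" if "0 < s" for s using dE1 that by blast
  show "(E2 has_real_derivative E3 s) (at s)" if "0 < s" for s using dE2 that by blast
  show "H 0 (1^2) 1 = 0" by (simp add: H_def xlnx_def)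
  show "E1 1 = 0" by (simp add: E1_def)
  show "E3 s > 0" if "0 < s" "s < 1" for s using E3_pos that by blast
  show "E1 s \<le> 0" if "0 < s" "s < 1" for s using E1_sign that by blast
  show "E1 s \<ge> 0" if "1 < s" for s using E1_sign[of s] that by simp
  show "continuous_on {0..} (\<lambda>s. H 0 (s^2) 1)" by (rule H0_cont)
  show "H 0 (0^2) 1 > 0" by (simp add: H_def xlnx_def ln_div)
qed

lemma counter:
  assumes p: "1/2 < p" "p < 1"
  shows "\<not> triangle_on_nonneg (\<lambda>x y. sqrt (H p x y))"
proof
  assume tri: "triangle_on_nonneg (\<lambda>x y. sqrt (H p x y))"
  have p0: "p \<noteq> 0" "p \<noteq> 1" using p by auto
  define G where "G s = H p (s^2) 1 / (1-s)^2" for s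
  have dec: "G b < G a" if ab: "0 \<le> a" "a < b" "b < 1" for a b
  proof -
    have "(- H p (a^2) 1) / (1-a)^2 < (- H p (b^2) 1) / (1-b)^2"
    proof (rule g_strict[where F = "\<lambda>s. - H p (s^2) 1" and ?F1.0 = "\<lambda>s. - Fg1 p s"
          and ?F2.0 = "\<lambda>s. - Fg2 p s" and ?F3.0 = "\<lambda>s. - Fg3 p s"])
      show "((\<lambda>s. - H p (s^2) 1) has_real_derivative - Fg1 p s) (at s)" if "0 < s" for s
        using dFh[OF p0 that] by (rule DERIV_minus)
      show "((\<lambda>s. - Fg1 p s) has_real_derivative - Fg2 p s) (at s)" if "0 < s" for s
        using dFg1[OF that p0(2) p0(1)] by (rule DERIV_minus)
      show "((\<lambda>s. - Fg2 p s) has_real_derivative - Fg3 p s) (at s)" if "0 < s" for s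
        using dFg2[OF that p0(2) p0(1)] by (rule DERIV_minus)
      show "- H p (1^2) 1 = 0" using Fh_eq[of 1 p] p0 Fg_1 by simp
      show "- Fg1 p 1 = 0" using Fg_1 by simp
      show "- Fg3 p s > 0" if "0 < s" "s < 1" for s using Fg3_sign(2)[OF p0 that p] by simp
      show "continuous_on {0..1} (\<lambda>s. - H p (s^2) 1)"
        by (intro continuous_intros continuous_on_subset[OF Fh_cont[OF p0]]) auto
    qed (use ab in auto)
    then show ?thesis by (simp add: G_def)
  qed
  have hv: "H p (c*r) c = c * H p r 1" if "0 < c" "0 \<le> r" for c r
    using H_hom[of c r 1 p] that by simp
  have G13: "H p 1 9 = 4 * G (1/3)"
  proof -
    have "H p 1 9 = H p (9 * ((1/3)^2)) 9" by (simp add: power2_eq_square)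
    also have "\<dots> = 9 * H p ((1/3)^2) 1" by (rule hv) auto
    finally show ?thesis by (simp add: G_def power2_eq_square)
  qed
  have G12: "H p 1 4 = G (1/2)"
  proof -
    have "H p 1 4 = H p (4 * ((1/2)^2)) 4" by (simp add: power2_eq_square)
    also have "\<dots> = 4 * H p ((1/2)^2) 1" by (rule hv) auto
    finally show ?thesis by (simp add: G_def power2_eq_square)
  qed
  have G23: "H p 4 9 = G (2/3)"
  proof -
    have "H p 4 9 = H p (9 * ((2/3)^2)) 9" by (simp add: power2_eq_square)
    also have "\<dots> = 9 * H p ((2/3)^2) 1" by (rule hv) auto
    finally show ?thesis by (simp add: G_def power2_eq_square)
  qed
  have "sqrt (H p 1 9) \<le> sqrt (H p 1 4) + sqrt (H p 4 9)"
    using tri unfolding triangle_on_nonneg_def by (metis zero_le_one zero_le_numeral)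
  then have "2 * sqrt (G (1/3)) \<le> sqrt (G (1/2)) + sqrt (G (2/3))"
    unfolding G13 G12 G23 by (simp add: real_sqrt_mult)
  moreover have "sqrt (G (1/2)) < sqrt (G (1/3))" using dec[of "1/3" "1/2"] by simp
  moreover have "sqrt (G (2/3)) < sqrt (G (1/3))" using dec[of "1/3" "2/3"] by simp
  ultimately show False by linarith
qed

theorem mainTheorem1:
  shows "(\<forall>p::real. (p \<le> 1/2 \<or> 1 \<le> p) \<longrightarrow> metric_on_nonneg (\<lambda>x y. sqrt (H p x y))) \<and>
         (\<forall>p::real. 1/2 < p \<and> p < 1 \<longrightarrow> \<not> triangle_on_nonneg (\<lambda>x y. sqrt (H p x y)))"
proof (intro conjI allI impI)
  fix p :: real assume p: "p \<le> 1/2 \<or> 1 \<le> p"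
  consider "p = 0" | "p = 1 \<or> p = 1/2" | "p \<noteq> 0" "p \<noteq> 1" "p < 1/2 \<or> 1 < p" using p by linarith
  then show "metric_on_nonneg (\<lambda>x y. sqrt (H p x y))"
  proof cases
    case 1 then show ?thesis using zero_metric by simp
  next
    case 2 then show ?thesis by (rule sqrt_metric)
  next
    case 3 then show ?thesis by (rule general_metric)
  qed
next
  fix p :: real assume "1/2 < p \<and> p < 1"
  then show "\<not> triangle_on_nonneg (\<lambda>x y. sqrt (H p x y))" using counter by blast
qed

end
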